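(* Let $\Sigma$ be a signature, $T$ a monad on sets carrying a continuous $\Sigma$-algebra structure, and $\Gamma$ a relator for the monad $T$ that is inductive and respects $\Sigma$. Then the closed part of the Howe extension $\precsim^H$ of applicative $\Gamma$-similarity, namely $(\{(M,N)\mid\emptyset\vdash M\precsim^H_{\mathcal{T}}N\},\{(V,W)\mid\emptyset\vdash V\precsim^H_{\mathcal{V}}W\})$, is an applicative $\Gamma$-simulation.
   Context: An $\omega$CPPO is a poset with least element $\bot$ in which every $\omega$-chain has a lub; continuous = monotone and preserving such lubs. $T$ (unit $\eta$, bind $u\texttt{>>=}f$) carries a continuous $\Sigma$-algebra structure if each $TX$ is an $\omega$CPPO, bind is continuous in both arguments, and each $\sigma\in\Sigma$ of arity $k$ is interpreted by a continuous $\sigma^T:(TX)^k\to TX$. A relator $\Gamma$ for $T$ assigns to each $R\subseteq X\times Y$ a relation $\Gamma R\subseteq TX\times TY$ with: $=_{TX}\subseteq\Gamma(=_X)$; $\Gamma S\circ\Gamma R\subseteq\Gamma(S\circ R)$; $\Gamma((f\times g)^{-1}R)=(Tf\times Tg)^{-1}\Gamma R$ where $(f\times g)^{-1}R=\{(z,w)\mid f(z)\,R\,g(w)\}$; monotone in $R$; $x\,R\,y\Rightarrow\eta(x)\,\Gamma R\,\eta(y)$; and if $x\,R\,y\Rightarrow f(x)\,\Gamma S\,g(y)$ for all $x,y$ then $u\,\Gamma R\,v\Rightarrow(u\texttt{>>=}f)\,\Gamma S\,(v\texttt{>>=}g)$. Inductive: for every $R$, $\bot\,\Gamma R\,v$ for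 all $v$, and for every $\omega$-chain $(u_n)$, $(\forall n.\ u_n\,\Gamma R\,v)\Rightarrow\bigsqcup_n u_n\,\Gamma R\,v$. Respects $\Sigma$: $u_i\,\Gamma R\,v_i$ for all $i$ implies $\sigma^T(\vec u)\,\Gamma R\,\sigma^T(\vec v)$. Terms/values: $M,N::=\mathsf{return}\,V\mid VW\mid(M\ \mathsf{to}\ x.N)\mid\sigma(M_1,\dots,M_{\alpha(\sigma)})$, $V,W::=x\mid\lambda x.M$, modulo $\alpha$-equivalence; $M[V/x]$ substitution; $\mathcal{T}_0,\mathcal{V}_0$ closed terms/values; $\mathcal{T}(\bar x),\mathcal{V}(\bar x)$ those with free variables in $\bar x$. For closed $M$: $M^{(0)}=\bot$, $(\mathsf{return}\,V)^{(n+1)}=\eta(V)$, $((\lambda x.M)V)^{(n+1)}=(M[V/x])^{(n)}$, $(M\ \mathsf{to}\ x.N)^{(n+1)}=M^{(n)}\texttt{>>=}(V\mapsto(N[V/x])^{(n)})$, $(\sigma(\vec M))^{(n+1)}=\sigma^T(M_1^{(n)},\dots)$; this is an $\omega$-chain and $[\![M]\!]=\bigsqcup_nM^{(n)}$. A closed relation $R=(R_{\mathcal{T}}\subseteq\mathcal{T}_0\times\mathcal{T}_0,R_{\mathcal{V}}\subseteq\mathcal{V}_0\times\mathcal{V}_0)$ is an applicative $\Gamma$-simulation if $M\,R_{\mathcal{T}}\,N\Rightarrow[\![M]\!]\,\Gamma R_{\mathcal{V}}\,[\![N]\!]$ and $V\,R_{\mathcal{V}}\,W\Rightarrow VU\,R_{\mathcal{T}}\,WU$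 for every closed value $U$. Applicative $\Gamma$-similarity $\precsim$ is the largest one. Its open extension $\precsim^\circ$: $\bar x\vdash M\precsim^\circ_{\mathcal{T}}N$ iff $M,N\in\mathcal{T}(\bar x)$ and $M[\bar V/\bar x]\precsim_{\mathcal{T}}N[\bar V/\bar x]$ for all closed values $\bar V$ (similarly for values). The Howe extension $\precsim^H$ is the least pair of sets of triples closed under: (H1) if $x\in\bar x$ and $\bar x\vdash x\precsim^\circ_{\mathcal{V}}V$ then $\bar x\vdash x\precsim^H_{\mathcal{V}}V$; (H2) if $x\notin\bar x$, $\bar x\cup\{x\}\vdash M\precsim^H_{\mathcal{T}}L$ and $\bar x\vdash\lambda x.L\precsim^\circ_{\mathcal{V}}V$ then $\bar x\vdash\lambda x.M\precsim^H_{\mathcal{V}}V$; (H3) if $\bar x\vdash V\precsim^H_{\mathcal{V}}W$ and $\bar x\vdash\mathsf{return}\,W\precsim^\circ_{\mathcal{T}}N$ then $\bar x\vdash\mathsf{return}\,V\precsim^H_{\mathcal{T}}N$; (H4) if $\bar x\vdash V\precsim^H_{\mathcal{V}}V'$, $\bar x\vdash W\precsim^H_{\mathcal{V}}W'$, $\bar x\vdash V'W'\precsim^\circ_{\mathcal{T}}N$ then $\bar x\vdash VW\precsim^H_{\mathcal{T}}N$; (H5) if $\bar x\vdash M\precsim^H_{\mathcal{T}}L$, $\bar x\cup\{x\}\vdash M'\precsim^H_{\mathcal{T}}L'$, $\bar x\vdash(L\ \mathsf{to}\ x.L')\precsim^\circ_{\mathcal{T}}N$ then $\bar x\vdash(M\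 \mathsf{to}\ x.M')\precsim^H_{\mathcal{T}}N$; (H6) if $\bar x\vdash M_k\precsim^H_{\mathcal{T}}N_k$ for all $k\le n$ and $\bar x\vdash\sigma(N_1,\dots,N_n)\precsim^\circ_{\mathcal{T}}N$ then $\bar x\vdash\sigma(M_1,\dots,M_n)\precsim^H_{\mathcal{T}}N$. *)

theory Defs
  imports Main
begin

section \<open>Syntax (de Bruijn indices, so terms are identified up to alpha-equivalence)\<close>

text \<open>The signature Sigma is a type of operation symbols 'op together with an arity
  function (a field of the record below).  Variable x_i of a context of length n is
  Var i (i < n); binders bind index 0.\<close>

datatype 'op trm =
    Ret "'op val"
  | App "'op val" "'op val"
  | To "'op trm" "'op trm"        (* To M N  =  M to x. N, with x bound as index 0 in N *)
  | Op 'op "'op trm list"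
and 'op val =
    Var nat
  | Lam "'op trm"                 (* Lam M  =  lambda x. M, x bound as index 0 *)

fun lift_trm :: "nat \<Rightarrow> 'op trm \<Rightarrow> 'op trm"
and lift_val :: "nat \<Rightarrow> 'op val \<Rightarrow> 'op val" where
  "lift_val k (Var i) = Var (if i < k then i else Suc i)"
| "lift_val k (Lam M) = Lam (lift_trm (Suc k) M)"
| "lift_trm k (Ret V) = Ret (lift_val k V)"
| "lift_trm k (App V W) = App (lift_val k V) (lift_val k W)"
| "lift_trm k (To M N) = To (lift_trm k M) (lift_trm (Suc k) N)"
| "lift_trm k (Op s Ms) = Op s (map (lift_trm k) Ms)"

definition ext_subst :: "(nat \<Rightarrow> 'op val) \<Rightarrow> nat \<Rightarrow> 'op val" where
  "ext_subst s = (\<lambda>i. case i of 0 \<Rightarrow> Var 0 | Suc j \<Rightarrow> lift_val 0 (s j))"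

fun psubst_trm :: "(nat \<Rightarrow> 'op val) \<Rightarrow> 'op trm \<Rightarrow> 'op trm"
and psubst_val :: "(nat \<Rightarrow> 'op val) \<Rightarrow> 'op val \<Rightarrow> 'op val" where
  "psubst_val s (Var i) = s i"
| "psubst_val s (Lam M) = Lam (psubst_trm (ext_subst s) M)"
| "psubst_trm s (Ret V) = Ret (psubst_val s V)"
| "psubst_trm s (App V W) = App (psubst_val s V) (psubst_val s W)"
| "psubst_trm s (To M N) = To (psubst_trm s M) (psubst_trm (ext_subst s) N)"
| "psubst_trm s (Op o' Ms) = Op o' (map (psubst_trm s) Ms)"

definition subst1 :: "'op val \<Rightarrow> 'op trm \<Rightarrow> 'op trm" where
  "subst1 V M = psubst_trm (\<lambda>i. case i of 0 \<Rightarrow> V | Suc j \<Rightarrow> Var j) M"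

text \<open>Well-formed terms/values with free variables among the first n (the sets T(x1..xn),
  V(x1..xn)); operation symbols must be applied to exactly arity-many arguments.\<close>
fun wf_trm :: "('op \<Rightarrow> nat) \<Rightarrow> nat \<Rightarrow> 'op trm \<Rightarrow> bool"
and wf_val :: "('op \<Rightarrow> nat) \<Rightarrow> nat \<Rightarrow> 'op val \<Rightarrow> bool" where
  "wf_val ar n (Var i) = (i < n)"
| "wf_val ar n (Lam M) = wf_trm ar (Suc n) M"
| "wf_trm ar n (Ret V) = wf_val ar n V"
| "wf_trm ar n (App V W) = (wf_val ar n V \<and> wf_val ar n W)"
| "wf_trm ar n (To M N) = (wf_trm ar n M \<and> wf_trm ar (Suc n) N)"
| "wf_trm ar n (Op s Ms) = (length Ms = ar s \<and> (\<forall>M\<in>set Ms. wf_trm ar n M))"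

text \<open>The type 't plays the role of T X for X = V_0 (the set of closed values);
  all monad/relator data is only needed (and only axiomatised) at this instance.\<close>
record ('op, 't) effsem =
  sig_ar   :: "'op \<Rightarrow> nat"
  ord_le   :: "'t \<Rightarrow> 't \<Rightarrow> bool"
  ord_bot  :: "'t"
  m_unit   :: "'op val \<Rightarrow> 't"
  m_bind   :: "'t \<Rightarrow> ('op val \<Rightarrow> 't) \<Rightarrow> 't"
  op_int   :: "'op \<Rightarrow> 't list \<Rightarrow> 't"
  rlt      :: "('op val \<Rightarrow> 'op val \<Rightarrow> bool) \<Rightarrow> 't \<Rightarrow> 't \<Rightarrow> bool"

definition cval :: "('op, 't) effsem \<Rightarrow> 'op val \<Rightarrow> bool" where
  "cval S V = wf_val (sig_ar S) 0 V"

definition ctrm :: "('op, 't) effsem \<Rightarrow> 'op trm \<Rightarrow> bool" where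
  "ctrm S M = wf_trm (sig_ar S) 0 M"

definition is_lub :: "('t \<Rightarrow> 't \<Rightarrow> bool) \<Rightarrow> 't set \<Rightarrow> 't \<Rightarrow> bool" where
  "is_lub le A x = ((\<forall>a\<in>A. le a x) \<and> (\<forall>b. (\<forall>a\<in>A. le a b) \<longrightarrow> le x b))"

definition omega_chain :: "('t \<Rightarrow> 't \<Rightarrow> bool) \<Rightarrow> (nat \<Rightarrow> 't) \<Rightarrow> bool" where
  "omega_chain le c = (\<forall>n. le (c n) (c (Suc n)))"

definition lub :: "('op, 't) effsem \<Rightarrow> (nat \<Rightarrow> 't) \<Rightarrow> 't" where
  "lub S c = (THE x. is_lub (ord_le S) (range c) x)"

definition omega_cppo :: "('t \<Rightarrow> 't \<Rightarrow> bool) \<Rightarrow> 't \<Rightarrow> bool" where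
  "omega_cppo le bt =
     ((\<forall>x. le x x) \<and> (\<forall>x y z. le x y \<longrightarrow> le y z \<longrightarrow> le x z)
      \<and> (\<forall>x y. le x y \<longrightarrow> le y x \<longrightarrow> x = y)
      \<and> (\<forall>x. le bt x)
      \<and> (\<forall>c. omega_chain le c \<longrightarrow> (\<exists>x. is_lub le (range c) x)))"

definition cont_sigma_monad :: "('op, 't) effsem \<Rightarrow> bool" where
  "cont_sigma_monad S =
     (omega_cppo (ord_le S) (ord_bot S)
      \<comment> \<open>monad laws\<close>
      \<and> (\<forall>x f. cval S x \<longrightarrow> m_bind S (m_unit S x) f = f x)
      \<and> (\<forall>u. m_bind S u (m_unit S) = u)
      \<and> (\<forall>u f g. m_bind S (m_bind S u f) g = m_bind S u (\<lambda>x. m_bind S (f x) g))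
      \<comment> \<open>bind continuous in its first argument\<close>
      \<and> (\<forall>u v f. ord_le S u v \<longrightarrow> ord_le S (m_bind S u f) (m_bind S v f))
      \<and> (\<forall>c f. omega_chain (ord_le S) c \<longrightarrow>
                m_bind S (lub S c) f = lub S (\<lambda>n. m_bind S (c n) f))
      \<comment> \<open>bind continuous in its second argument (pointwise order on V_0 -> T V_0)\<close>
      \<and> (\<forall>u f g. (\<forall>x. cval S x \<longrightarrow> ord_le S (f x) (g x)) \<longrightarrow>
                 ord_le S (m_bind S u f) (m_bind S u g))
      \<and> (\<forall>u F. (\<forall>x. cval S x \<longrightarrow> omega_chain (ord_le S) (\<lambda>n. F n x)) \<longrightarrow>
                m_bind S u (\<lambda>x. lub S (\<lambda>n. F n x)) = lub S (\<lambda>n. m_bind S u (F n)))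
      \<comment> \<open>each operation symbol interpreted by a continuous map (T X)^k -> T X\<close>
      \<and> (\<forall>s us vs. length us = sig_ar S s \<longrightarrow> list_all2 (ord_le S) us vs \<longrightarrow>
                   ord_le S (op_int S s us) (op_int S s vs))
      \<and> (\<forall>s c. (\<forall>n. length (c n) = sig_ar S s) \<longrightarrow>
               (\<forall>n. list_all2 (ord_le S) (c n) (c (Suc n))) \<longrightarrow>
               op_int S s (map (\<lambda>i. lub S (\<lambda>n. c n ! i)) [0..<sig_ar S s])
                 = lub S (\<lambda>n. op_int S s (c n))))"

definition Tmap :: "('op, 't) effsem \<Rightarrow> ('op val \<Rightarrow> 'op val) \<Rightarrow> 't \<Rightarrow> 't" where
  "Tmap S f u = m_bind S u (\<lambda>x. m_unit S (f x))"

definition is_relator :: "('op, 't) effsem \<Rightarrow> bool" where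
  "is_relator S =
     ((\<forall>u. rlt S (\<lambda>x y. cval S x \<and> x = y) u u)
      \<and> (\<forall>R Q u v w. rlt S R u v \<longrightarrow> rlt S Q v w \<longrightarrow> rlt S (R OO Q) u w)
      \<and> (\<forall>f g R u v. (\<forall>x. cval S x \<longrightarrow> cval S (f x)) \<longrightarrow> (\<forall>x. cval S x \<longrightarrow> cval S (g x)) \<longrightarrow>
           (rlt S (\<lambda>z w. cval S z \<and> cval S w \<and> R (f z) (g w)) u v
              = rlt S R (Tmap S f u) (Tmap S g v)))
      \<and> (\<forall>R Q u v. (\<forall>x y. R x y \<longrightarrow> Q x y) \<longrightarrow> rlt S R u v \<longrightarrow> rlt S Q u v)
      \<and> (\<forall>R x y. cval S x \<longrightarrow> cval S y \<longrightarrow> R x y \<longrightarrow> rlt S R (m_unit S x) (m_unit S y))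
      \<and> (\<forall>R Q f g u v. (\<forall>x y. cval S x \<longrightarrow> cval S y \<longrightarrow> R x y \<longrightarrow> rlt S Q (f x) (g y)) \<longrightarrow>
           rlt S R u v \<longrightarrow> rlt S Q (m_bind S u f) (m_bind S v g)))"

definition inductive_relator :: "('op, 't) effsem \<Rightarrow> bool" where
  "inductive_relator S =
     (\<forall>R. (\<forall>v. rlt S R (ord_bot S) v)
        \<and> (\<forall>c v. omega_chain (ord_le S) c \<longrightarrow> (\<forall>n. rlt S R (c n) v) \<longrightarrow> rlt S R (lub S c) v))"

definition respects_sigma :: "('op, 't) effsem \<Rightarrow> bool" where
  "respects_sigma S =
     (\<forall>R s us vs. length us = sig_ar S s \<longrightarrow> list_all2 (rlt S R) us vs \<longrightarrow>
        rlt S R (op_int S s us) (op_int S s vs))"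

primrec approx :: "('op, 't) effsem \<Rightarrow> nat \<Rightarrow> 'op trm \<Rightarrow> 't" where
  "approx S 0 M = ord_bot S"
| "approx S (Suc n) M =
     (case M of
        Ret V \<Rightarrow> m_unit S V
      | App V W \<Rightarrow> (case V of Lam M' \<Rightarrow> approx S n (subst1 W M') | Var _ \<Rightarrow> ord_bot S)
      | To M1 N \<Rightarrow> m_bind S (approx S n M1) (\<lambda>V. approx S n (subst1 V N))
      | Op s Ms \<Rightarrow> op_int S s (map (approx S n) Ms))"

definition sem :: "('op, 't) effsem \<Rightarrow> 'op trm \<Rightarrow> 't" where
  "sem S M = lub S (\<lambda>n. approx S n M)"

definition app_sim :: "('op, 't) effsem \<Rightarrow> ('op trm \<Rightarrow> 'op trm \<Rightarrow> bool)
                        \<Rightarrow> ('op val \<Rightarrow> 'op val \<Rightarrow> bool) \<Rightarrow> bool" where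
  "app_sim S RT RV =
     ((\<forall>M N. RT M N \<longrightarrow> ctrm S M \<and> ctrm S N)
      \<and> (\<forall>V W. RV V W \<longrightarrow> cval S V \<and> cval S W)
      \<and> (\<forall>M N. RT M N \<longrightarrow> rlt S RV (sem S M) (sem S N))
      \<and> (\<forall>V W U. RV V W \<longrightarrow> cval S U \<longrightarrow> RT (App V U) (App W U)))"

definition simT :: "('op, 't) effsem \<Rightarrow> 'op trm \<Rightarrow> 'op trm \<Rightarrow> bool" where
  "simT S M N = (\<exists>RT RV. app_sim S RT RV \<and> RT M N)"

definition simV :: "('op, 't) effsem \<Rightarrow> 'op val \<Rightarrow> 'op val \<Rightarrow> bool" where
  "simV S V W = (\<exists>RT RV. app_sim S RT RV \<and> RV V W)"

definition openT :: "('op, 't) effsem \<Rightarrow> nat \<Rightarrow> 'op trm \<Rightarrow> 'op trm \<Rightarrow> bool" where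
  "openT S n M N =
     (wf_trm (sig_ar S) n M \<and> wf_trm (sig_ar S) n N \<and>
      (\<forall>vs. (\<forall>i<n. cval S (vs i)) \<longrightarrow> simT S (psubst_trm vs M) (psubst_trm vs N)))"

definition openV :: "('op, 't) effsem \<Rightarrow> nat \<Rightarrow> 'op val \<Rightarrow> 'op val \<Rightarrow> bool" where
  "openV S n V W =
     (wf_val (sig_ar S) n V \<and> wf_val (sig_ar S) n W \<and>
      (\<forall>vs. (\<forall>i<n. cval S (vs i)) \<longrightarrow> simV S (psubst_val vs V) (psubst_val vs W)))"

inductive howeT :: "('op, 't) effsem \<Rightarrow> nat \<Rightarrow> 'op trm \<Rightarrow> 'op trm \<Rightarrow> bool"
and howeV :: "('op, 't) effsem \<Rightarrow> nat \<Rightarrow> 'op val \<Rightarrow> 'op val \<Rightarrow> bool"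
for S :: "('op, 't) effsem" where
  H1: "i < n \<Longrightarrow> openV S n (Var i) V \<Longrightarrow> howeV S n (Var i) V"
| H2: "howeT S (Suc n) M L \<Longrightarrow> openV S n (Lam L) V \<Longrightarrow> howeV S n (Lam M) V"
| H3: "howeV S n V W \<Longrightarrow> openT S n (Ret W) N \<Longrightarrow> howeT S n (Ret V) N"
| H4: "howeV S n V V' \<Longrightarrow> howeV S n W W' \<Longrightarrow> openT S n (App V' W') N
         \<Longrightarrow> howeT S n (App V W) N"
| H5: "howeT S n M L \<Longrightarrow> howeT S (Suc n) M' L' \<Longrightarrow> openT S n (To L L') N
         \<Longrightarrow> howeT S n (To M M') N"
| H6: "length Ms = length Ns \<Longrightarrow> (\<forall>k<length Ms. howeT S n (Ms ! k) (Ns ! k))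
         \<Longrightarrow> openT S n (Op s Ns) N \<Longrightarrow> howeT S n (Op s Ms) N"

end

theory Submission
  imports Defs
begin


lemma wf_lift: fixes M :: "'op trm" and V :: "'op val" shows
  "wf_trm ar n M \<Longrightarrow> wf_trm ar (Suc n) (lift_trm j M)"
  and "wf_val ar n V \<Longrightarrow> wf_val ar (Suc n) (lift_val j V)"
  by (induction M and V arbitrary: n j and n j) auto

lemma wf_ext: "\<forall>i<m. wf_val ar k (s i) \<Longrightarrow> \<forall>i<Suc m. wf_val ar (Suc k) (ext_subst s i)"
  by (auto simp: ext_subst_def wf_lift split: nat.split)

lemma wf_psubst: fixes M :: "'op trm" and V :: "'op val" shows
  "wf_trm ar m M \<Longrightarrow> \<forall>i<m. wf_val ar k (s i) \<Longrightarrow> wf_trm ar k (psubst_trm s M)"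
  and "wf_val ar m V \<Longrightarrow> \<forall>i<m. wf_val ar k (s i) \<Longrightarrow> wf_val ar k (psubst_val s V)"
proof (induction M and V arbitrary: m k s and m k s)
  case (Lam M) thus ?case using wf_ext[OF Lam.prems(2)] by auto
next
  case (To M N) thus ?case using wf_ext[OF To.prems(2)] by auto
qed auto

lemma ext_cong: "\<forall>i<m. s i = t i \<Longrightarrow> \<forall>i<Suc m. ext_subst s i = ext_subst t i"
  by (auto simp: ext_subst_def split: nat.split)

lemma psubst_cong: fixes M :: "'op trm" and V :: "'op val" shows
  "wf_trm ar m M \<Longrightarrow> \<forall>i<m. s i = t i \<Longrightarrow> psubst_trm s M = psubst_trm t M"
  and "wf_val ar m V \<Longrightarrow> \<forall>i<m. s i = t i \<Longrightarrow> psubst_val s V = psubst_val t V"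
proof (induction M and V arbitrary: m s t and m s t)
  case (Lam M) thus ?case using ext_cong[OF Lam.prems(2)] by auto
next
  case (To M N) thus ?case using ext_cong[OF To.prems(2)] by auto
qed auto

lemma ext_Var: "ext_subst Var = Var" by (auto simp: ext_subst_def split: nat.split)

lemma psubst_id: fixes M :: "'op trm" and V :: "'op val" shows "psubst_trm Var M = M" and "psubst_val Var V = V"
  by (induction M and V) (auto simp: ext_Var intro: map_idI)

lemma closed_trm: "wf_trm ar 0 M \<Longrightarrow> psubst_trm s M = M"
  using psubst_cong(1)[of ar 0 M s Var] psubst_id by auto

lemma closed_val: "wf_val ar 0 V \<Longrightarrow> psubst_val s V = V"
  using psubst_cong(2)[of ar 0 V s Var] psubst_id by auto

definition upren :: "(nat \<Rightarrow> nat) \<Rightarrow> nat \<Rightarrow> nat" where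
  "upren r i = (case i of 0 \<Rightarrow> 0 | Suc j \<Rightarrow> Suc (r j))"

lemma ext_ren: "ext_subst (Var \<circ> r) = Var \<circ> upren r"
  by (auto simp: ext_subst_def upren_def split: nat.split)

lemma ext_ren': "ext_subst (\<lambda>i. Var (r i)) = (\<lambda>i. Var (upren r i))"
  using ext_ren[of r] by (simp add: o_def)

lemma lift_ren: fixes M :: "'op trm" and V :: "'op val" shows
  "lift_trm k M = psubst_trm (\<lambda>i. Var (if i < k then i else Suc i)) M"
  and "lift_val k V = psubst_val (\<lambda>i. Var (if i < k then i else Suc i)) V"
proof -
  have e: "ext_subst (\<lambda>i. Var (if i < k then i else Suc i)) = (\<lambda>i. Var (if i < Suc k then i else Suc i))" for k
    by (auto simp: ext_subst_def split: nat.split)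
  show "lift_trm k M = psubst_trm (\<lambda>i. Var (if i < k then i else Suc i)) M"
       "lift_val k V = psubst_val (\<lambda>i. Var (if i < k then i else Suc i)) V"
    by (induction M and V arbitrary: k and k) (auto simp: e)
qed

lemma lift0: "lift_val 0 V = psubst_val (\<lambda>i. Var (Suc i)) V"
  using lift_ren(2)[of 0 V] by simp

lemma comp_ren1: fixes M :: "'op trm" and V :: "'op val" shows
  "psubst_trm s (psubst_trm (\<lambda>i. Var (r i)) M) = psubst_trm (\<lambda>i. s (r i)) M"
  and "psubst_val s (psubst_val (\<lambda>i. Var (r i)) V) = psubst_val (\<lambda>i. s (r i)) V"
proof -
  have e: "(\<lambda>i. ext_subst s (upren r i)) = ext_subst (\<lambda>i. s (r i))" for s r
    by (auto simp: ext_subst_def upren_def split: nat.split)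
  show "psubst_trm s (psubst_trm (\<lambda>i. Var (r i)) M) = psubst_trm (\<lambda>i. s (r i)) M"
       "psubst_val s (psubst_val (\<lambda>i. Var (r i)) V) = psubst_val (\<lambda>i. s (r i)) V"
    by (induction M and V arbitrary: s r and s r) (auto simp: ext_ren' e)
qed

lemma comp_ren2: fixes M :: "'op trm" and V :: "'op val" shows
  "psubst_trm (\<lambda>i. Var (r i)) (psubst_trm s M) = psubst_trm (\<lambda>i. psubst_val (\<lambda>i. Var (r i)) (s i)) M"
  and "psubst_val (\<lambda>i. Var (r i)) (psubst_val s V) = psubst_val (\<lambda>i. psubst_val (\<lambda>i. Var (r i)) (s i)) V"
proof -
  have e: "ext_subst (\<lambda>i. psubst_val (\<lambda>i. Var (r i)) (s i)) = (\<lambda>i. psubst_val (\<lambda>i. Var (upren r i)) (ext_subst s i))" for s r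
  proof
    fix i show "ext_subst (\<lambda>i. psubst_val (\<lambda>i. Var (r i)) (s i)) i = psubst_val (\<lambda>i. Var (upren r i)) (ext_subst s i)"
      by (cases i) (auto simp: ext_subst_def lift0 comp_ren1 upren_def)
  qed
  show "psubst_trm (\<lambda>i. Var (r i)) (psubst_trm s M) = psubst_trm (\<lambda>i. psubst_val (\<lambda>i. Var (r i)) (s i)) M"
       "psubst_val (\<lambda>i. Var (r i)) (psubst_val s V) = psubst_val (\<lambda>i. psubst_val (\<lambda>i. Var (r i)) (s i)) V"
    by (induction M and V arbitrary: s r and s r) (auto simp: ext_ren' e)
qed

lemma comp_subst: fixes M :: "'op trm" and V :: "'op val" shows
  "psubst_trm s (psubst_trm t M) = psubst_trm (\<lambda>i. psubst_val s (t i)) M"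
  and "psubst_val s (psubst_val t V) = psubst_val (\<lambda>i. psubst_val s (t i)) V"
proof -
  have e: "ext_subst (\<lambda>i. psubst_val s (t i)) = (\<lambda>i. psubst_val (ext_subst s) (ext_subst t i))" for s t
  proof
    fix i show "ext_subst (\<lambda>i. psubst_val s (t i)) i = psubst_val (ext_subst s) (ext_subst t i)"
      by (cases i) (auto simp: ext_subst_def lift0 comp_ren1 comp_ren2)
  qed
  show "psubst_trm s (psubst_trm t M) = psubst_trm (\<lambda>i. psubst_val s (t i)) M"
       "psubst_val s (psubst_val t V) = psubst_val (\<lambda>i. psubst_val s (t i)) V"
    by (induction M and V arbitrary: s t and s t) (auto simp: e)
qed




locale hs =
  fixes S :: "('op, 't) effsem"
  assumes cm: "cont_sigma_monad S" and rel: "is_relator S"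
    and ind: "inductive_relator S" and rs: "respects_sigma S"
begin

abbreviation le where "le \<equiv> ord_le S"

lemmas cmu = cm[unfolded cont_sigma_monad_def omega_cppo_def conj_assoc]
lemmas c1 = cmu[THEN conjunct1]
lemmas c2 = cmu[THEN conjunct2, THEN conjunct1]
lemmas c3 = cmu[THEN conjunct2, THEN conjunct2, THEN conjunct1]
lemmas c4 = cmu[THEN conjunct2, THEN conjunct2, THEN conjunct2, THEN conjunct1]
lemmas c5 = cmu[THEN conjunct2, THEN conjunct2, THEN conjunct2, THEN conjunct2, THEN conjunct1]
lemmas c6 = cmu[THEN conjunct2, THEN conjunct2, THEN conjunct2, THEN conjunct2, THEN conjunct2, THEN conjunct1]
lemmas c7 = cmu[THEN conjunct2, THEN conjunct2, THEN conjunct2, THEN conjunct2, THEN conjunct2, THEN conjunct2, THEN conjunct1]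
lemmas c8 = cmu[THEN conjunct2, THEN conjunct2, THEN conjunct2, THEN conjunct2, THEN conjunct2, THEN conjunct2, THEN conjunct2, THEN conjunct1]
lemmas c9 = cmu[THEN conjunct2, THEN conjunct2, THEN conjunct2, THEN conjunct2, THEN conjunct2, THEN conjunct2, THEN conjunct2, THEN conjunct2, THEN conjunct1]
lemmas c10 = cmu[THEN conjunct2, THEN conjunct2, THEN conjunct2, THEN conjunct2, THEN conjunct2, THEN conjunct2, THEN conjunct2, THEN conjunct2, THEN conjunct2, THEN conjunct1]
lemmas c11 = cmu[THEN conjunct2, THEN conjunct2, THEN conjunct2, THEN conjunct2, THEN conjunct2, THEN conjunct2, THEN conjunct2, THEN conjunct2, THEN conjunct2, THEN conjunct2, THEN conjunct1]
lemmas c12 = cmu[THEN conjunct2, THEN conjunct2, THEN conjunct2, THEN conjunct2, THEN conjunct2, THEN conjunct2, THEN conjunct2, THEN conjunct2, THEN conjunct2, THEN conjunct2, THEN conjunct2, THEN conjunct1]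
lemmas c13 = cmu[THEN conjunct2, THEN conjunct2, THEN conjunct2, THEN conjunct2, THEN conjunct2, THEN conjunct2, THEN conjunct2, THEN conjunct2, THEN conjunct2, THEN conjunct2, THEN conjunct2, THEN conjunct2, THEN conjunct1]
lemmas c14 = cmu[THEN conjunct2, THEN conjunct2, THEN conjunct2, THEN conjunct2, THEN conjunct2, THEN conjunct2, THEN conjunct2, THEN conjunct2, THEN conjunct2, THEN conjunct2, THEN conjunct2, THEN conjunct2, THEN conjunct2]
lemma lrefl: "le x x" using c1 by blast
lemma ltrans: "le x y \<Longrightarrow> le y z \<Longrightarrow> le x z" using c2 by blast
lemma lanti: "le x y \<Longrightarrow> le y x \<Longrightarrow> x = y" using c3 by blast
lemma bot_le: "le (ord_bot S) x" using c4 by blast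
lemma lub_ex: "omega_chain le c \<Longrightarrow> \<exists>x. is_lub le (range c) x" using c5 by blast
lemma bind_mono1: "le u v \<Longrightarrow> le (m_bind S u f) (m_bind S v f)" using c9 by blast
lemma bind_cont1: "omega_chain le c \<Longrightarrow> m_bind S (lub S c) f = lub S (\<lambda>n. m_bind S (c n) f)" using c10 by blast
lemma bind_mono2: "(\<And>x. cval S x \<Longrightarrow> le (f x) (g x)) \<Longrightarrow> le (m_bind S u f) (m_bind S u g)" using c11 by blast
lemma bind_cont2: "(\<And>x. cval S x \<Longrightarrow> omega_chain le (\<lambda>n. F n x)) \<Longrightarrow>
                m_bind S u (\<lambda>x. lub S (\<lambda>n. F n x)) = lub S (\<lambda>n. m_bind S u (F n))" using c12 by blast
lemma op_mono: "length us = sig_ar S s \<Longrightarrow> list_all2 le us vs \<Longrightarrow> le (op_int S s us) (op_int S s vs)"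
  using c13 by blast
lemma op_cont: "(\<And>n. length (c n) = sig_ar S s) \<Longrightarrow> (\<And>n. list_all2 le (c n) (c (Suc n))) \<Longrightarrow>
               op_int S s (map (\<lambda>i. lub S (\<lambda>n. c n ! i)) [0..<sig_ar S s]) = lub S (\<lambda>n. op_int S s (c n))"
  using c14 by blast

lemmas relu = rel[unfolded is_relator_def conj_assoc]
lemmas r1 = relu[THEN conjunct1]
lemmas r2 = relu[THEN conjunct2, THEN conjunct1]
lemmas r3 = relu[THEN conjunct2, THEN conjunct2, THEN conjunct1]
lemmas r4 = relu[THEN conjunct2, THEN conjunct2, THEN conjunct2, THEN conjunct1]
lemmas r5 = relu[THEN conjunct2, THEN conjunct2, THEN conjunct2, THEN conjunct2, THEN conjunct1]
lemmas r6 = relu[THEN conjunct2, THEN conjunct2, THEN conjunct2, THEN conjunct2, THEN conjunct2]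

lemma r_id: "rlt S (\<lambda>x y. cval S x \<and> x = y) u u" using r1 by blast
lemma r_comp: "rlt S R u v \<Longrightarrow> rlt S Q v w \<Longrightarrow> rlt S (R OO Q) u w" using r2 by blast
lemma r_mono: "(\<And>x y. R x y \<Longrightarrow> Q x y) \<Longrightarrow> rlt S R u v \<Longrightarrow> rlt S Q u v" using r4 by blast
lemma r_unit: "cval S x \<Longrightarrow> cval S y \<Longrightarrow> R x y \<Longrightarrow> rlt S R (m_unit S x) (m_unit S y)" using r5 by blast
lemma r_bind: "(\<And>x y. cval S x \<Longrightarrow> cval S y \<Longrightarrow> R x y \<Longrightarrow> rlt S Q (f x) (g y)) \<Longrightarrow>
           rlt S R u v \<Longrightarrow> rlt S Q (m_bind S u f) (m_bind S v g)" using r6 by blast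
lemma r_bot: "rlt S R (ord_bot S) v" using ind unfolding inductive_relator_def by blast
lemma r_lub: "omega_chain le c \<Longrightarrow> (\<And>n. rlt S R (c n) v) \<Longrightarrow> rlt S R (lub S c) v" using ind unfolding inductive_relator_def by blast
lemma r_op: "length us = sig_ar S s \<Longrightarrow> list_all2 (rlt S R) us vs \<Longrightarrow> rlt S R (op_int S s us) (op_int S s vs)"
  using rs unfolding respects_sigma_def by blast

lemma lub_eqI: "is_lub le (range c) x \<Longrightarrow> lub S c = x"
  unfolding lub_def
  by (rule the_equality) (auto simp: is_lub_def intro: lanti)

lemma lub_is: "omega_chain le c \<Longrightarrow> is_lub le (range c) (lub S c)"
  using lub_ex lub_eqI by metis

lemma lub_upper: "omega_chain le c \<Longrightarrow> le (c n) (lub S c)"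
  using lub_is unfolding is_lub_def by blast

lemma lub_least: "omega_chain le c \<Longrightarrow> (\<And>n. le (c n) b) \<Longrightarrow> le (lub S c) b"
  using lub_is unfolding is_lub_def by blast

lemma chain_mono: "omega_chain le c \<Longrightarrow> m \<le> n \<Longrightarrow> le (c m) (c n)"
proof (induction n)
  case 0 thus ?case using lrefl by simp
next
  case (Suc n) thus ?case
    by (metis le_Suc_eq lrefl ltrans omega_chain_def)
qed

lemma lub_shift: "omega_chain le c \<Longrightarrow> lub S (\<lambda>n. c (Suc n)) = lub S c"
proof -
  assume ch: "omega_chain le c"
  have "is_lub le (range (\<lambda>n. c (Suc n))) (lub S c)"
    unfolding is_lub_def
  proof safe
    fix n show "le (c (Suc n)) (lub S c)" using lub_upper[OF ch] .
  next
    fix b assume "\<forall>a\<in>range (\<lambda>n. c (Suc n)). le a b"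
    hence "le (c (Suc n)) b" for n by auto
    hence "le (c n) b" for n using ch unfolding omega_chain_def by (metis ltrans)
    thus "le (lub S c) b" using lub_least[OF ch] by blast
  qed
  thus ?thesis by (rule lub_eqI)
qed

lemma lub_const: "lub S (\<lambda>n. x) = x"
  by (rule lub_eqI) (auto simp: is_lub_def lrefl)

lemma diag:
  assumes mono: "\<And>m n m' n'. m \<le> m' \<Longrightarrow> n \<le> n' \<Longrightarrow> le (F m n) (F m' n')"
  shows "lub S (\<lambda>m. lub S (\<lambda>n. F m n)) = lub S (\<lambda>n. F n n)"
proof -
  have chn: "omega_chain le (\<lambda>n. F m n)" for m using mono unfolding omega_chain_def by auto
  have chd: "omega_chain le (\<lambda>n. F n n)" using mono unfolding omega_chain_def by auto
  have chm: "omega_chain le (\<lambda>m. lub S (\<lambda>n. F m n))"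
    unfolding omega_chain_def
  proof
    fix m show "le (lub S (\<lambda>n. F m n)) (lub S (\<lambda>n. F (Suc m) n))"
      by (rule lub_least[OF chn]) (meson chn ltrans lub_upper mono order_refl le_SucI)
  qed
  show ?thesis
  proof (rule lanti)
    show "le (lub S (\<lambda>m. lub S (\<lambda>n. F m n))) (lub S (\<lambda>n. F n n))"
    proof (rule lub_least[OF chm])
      fix m show "le (lub S (\<lambda>n. F m n)) (lub S (\<lambda>n. F n n))"
      proof (rule lub_least[OF chn])
        fix n have "le (F m n) (F (max m n) (max m n))" by (rule mono) auto
        thus "le (F m n) (lub S (\<lambda>n. F n n))" using lub_upper[OF chd] ltrans by blast
      qed
    qed
  next
    show "le (lub S (\<lambda>n. F n n)) (lub S (\<lambda>m. lub S (\<lambda>n. F m n)))"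
    proof (rule lub_least[OF chd])
      fix n show "le (F n n) (lub S (\<lambda>m. lub S (\<lambda>n. F m n)))"
        using lub_upper[OF chn, of n n] lub_upper[OF chm, of n] ltrans by blast
    qed
  qed
qed

end



lemma wf_subst1: "wf_val ar 0 V \<Longrightarrow> wf_trm ar (Suc 0) N \<Longrightarrow> wf_trm ar 0 (subst1 V N)"
  unfolding subst1_def by (rule wf_psubst(1)) auto

context hs begin

lemma ctrm_subst1: "cval S V \<Longrightarrow> wf_trm (sig_ar S) (Suc 0) N \<Longrightarrow> ctrm S (subst1 V N)"
  unfolding cval_def ctrm_def by (rule wf_subst1)

lemma approx_chain: "ctrm S M \<Longrightarrow> le (approx S n M) (approx S (Suc n) M)"
proof (induction n arbitrary: M)
  case 0 thus ?case by (simp add: bot_le)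
next
  case (Suc n)
  show ?case
  proof (cases M)
    case (Ret x1) thus ?thesis by (simp add: lrefl)
  next
    case (App V W)
    show ?thesis
    proof (cases V)
      case (Var x) thus ?thesis using App by (simp add: lrefl)
    next
      case (Lam M')
      have "ctrm S (subst1 W M')" using Suc.prems App Lam
        by (intro ctrm_subst1) (auto simp: ctrm_def cval_def)
      thus ?thesis using Suc.IH App Lam by simp
    qed
  next
    case (To M1 N)
    have c1: "ctrm S M1" using Suc.prems To by (simp add: ctrm_def)
    have c2: "cval S V \<Longrightarrow> ctrm S (subst1 V N)" for V using Suc.prems To
      by (intro ctrm_subst1) (auto simp: ctrm_def)
    have "le (m_bind S (approx S n M1) (\<lambda>V. approx S n (subst1 V N)))
             (m_bind S (approx S (Suc n) M1) (\<lambda>V. approx S n (subst1 V N)))"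
      using Suc.IH[OF c1] by (rule bind_mono1)
    moreover have "le (m_bind S (approx S (Suc n) M1) (\<lambda>V. approx S n (subst1 V N)))
             (m_bind S (approx S (Suc n) M1) (\<lambda>V. approx S (Suc n) (subst1 V N)))"
      using Suc.IH[OF c2] by (rule bind_mono2)
    ultimately have "le (m_bind S (approx S n M1) (\<lambda>V. approx S n (subst1 V N)))
             (m_bind S (approx S (Suc n) M1) (\<lambda>V. approx S (Suc n) (subst1 V N)))" by (rule ltrans)
    thus ?thesis using To by simp
  next
    case (Op s Ms)
    have l: "length Ms = sig_ar S s" and c: "\<forall>M\<in>set Ms. ctrm S M" using Suc.prems Op by (auto simp: ctrm_def)
    have "list_all2 le (map (approx S n) Ms) (map (approx S (Suc n)) Ms)"
      using c Suc.IH by (auto simp: list_all2_conv_all_nth)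
    thus ?thesis using Op l by (simp add: op_mono)
  qed
qed

lemma approx_ochain: "ctrm S M \<Longrightarrow> omega_chain le (\<lambda>n. approx S n M)"
  unfolding omega_chain_def by (intro allI) (rule approx_chain)

lemma approx_le_sem: "ctrm S M \<Longrightarrow> le (approx S n M) (sem S M)"
  unfolding sem_def by (rule lub_upper[OF approx_ochain])

lemma sem_shift: "ctrm S M \<Longrightarrow> sem S M = lub S (\<lambda>n. approx S (Suc n) M)"
  unfolding sem_def by (rule lub_shift[OF approx_ochain, symmetric])

lemma sem_Ret: "cval S W \<Longrightarrow> sem S (Ret W) = m_unit S W"
  using sem_shift[of "Ret W"] by (simp add: ctrm_def cval_def lub_const)

lemma sem_App: "cval S U \<Longrightarrow> wf_trm (sig_ar S) (Suc 0) L \<Longrightarrow> sem S (App (Lam L) U) = sem S (subst1 U L)"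
  using sem_shift[of "App (Lam L) U"] by (simp add: ctrm_def cval_def sem_def)

lemma sem_To: assumes "ctrm S (To L L')"
  shows "sem S (To L L') = m_bind S (sem S L) (\<lambda>V. sem S (subst1 V L'))"
proof -
  have cL: "ctrm S L" and cL': "cval S V \<Longrightarrow> ctrm S (subst1 V L')" for V
    using assms by (auto simp: ctrm_def cval_def intro: wf_subst1)
  define G where "G m n = m_bind S (approx S m L) (\<lambda>V. approx S n (subst1 V L'))" for m n
  have "m_bind S (sem S L) (\<lambda>V. sem S (subst1 V L')) = lub S (\<lambda>m. m_bind S (approx S m L) (\<lambda>V. sem S (subst1 V L')))"
    unfolding sem_def[of S L] using approx_ochain[OF cL] by (rule bind_cont1)
  also have "\<dots> = lub S (\<lambda>m. lub S (\<lambda>n. G m n))"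
  proof -
    have "m_bind S (approx S m L) (\<lambda>V. lub S (\<lambda>n. approx S n (subst1 V L'))) = lub S (\<lambda>n. G m n)" for m
      unfolding G_def by (rule bind_cont2) (rule approx_ochain[OF cL'])
    thus ?thesis unfolding sem_def by simp
  qed
  also have "\<dots> = lub S (\<lambda>n. G n n)"
  proof (rule diag)
    fix m n m' n' :: nat assume mn: "m \<le> m'" "n \<le> n'"
    have "le (G m n) (G m' n)" unfolding G_def
      by (rule bind_mono1, rule chain_mono[OF approx_ochain[OF cL] mn(1)])
    moreover have "le (G m' n) (G m' n')" unfolding G_def
      by (rule bind_mono2, rule chain_mono[OF approx_ochain[OF cL'] mn(2)])
    ultimately show "le (G m n) (G m' n')" by (rule ltrans)
  qed
  also have "\<dots> = sem S (To L L')" unfolding sem_shift[OF assms] G_def by simp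
  finally show ?thesis by simp
qed

lemma sem_Op: assumes "ctrm S (Op s Ns)"
  shows "sem S (Op s Ns) = op_int S s (map (sem S) Ns)"
proof -
  have l: "length Ns = sig_ar S s" and c: "\<forall>M\<in>set Ns. ctrm S M" using assms by (auto simp: ctrm_def)
  have "op_int S s (map (\<lambda>i. lub S (\<lambda>n. map (approx S n) Ns ! i)) [0..<sig_ar S s]) =
        lub S (\<lambda>n. op_int S s (map (approx S n) Ns))"
  proof (rule op_cont)
    fix n show "length (map (approx S n) Ns) = sig_ar S s" using l by simp
    show "list_all2 le (map (approx S n) Ns) (map (approx S (Suc n)) Ns)"
      unfolding list_all2_conv_all_nth using c approx_chain by simp
  qed
  moreover have "map (\<lambda>i. lub S (\<lambda>n. map (approx S n) Ns ! i)) [0..<sig_ar S s] = map (sem S) Ns"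
    using l by (auto simp: sem_def intro: nth_equalityI)
  ultimately show ?thesis unfolding sem_shift[OF assms] by simp
qed

end



context hs begin

lemma sim_app_sim: "app_sim S (simT S) (simV S)"
proof -
  have 1: "\<forall>M N. simT S M N \<longrightarrow> ctrm S M \<and> ctrm S N"
    unfolding simT_def app_sim_def by blast
  have 2: "\<forall>V W. simV S V W \<longrightarrow> cval S V \<and> cval S W"
    unfolding simV_def app_sim_def by blast
  have 3: "\<forall>M N. simT S M N \<longrightarrow> rlt S (simV S) (sem S M) (sem S N)"
  proof (intro allI impI)
    fix M N assume "simT S M N"
    then obtain RT RV where a: "app_sim S RT RV" "RT M N" unfolding simT_def by blast
    have "rlt S RV (sem S M) (sem S N)" using a unfolding app_sim_def by blast
    thus "rlt S (simV S) (sem S M) (sem S N)"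
    proof (rule r_mono[rotated])
      fix x y assume "RV x y" thus "simV S x y" using a(1) unfolding simV_def by blast
    qed
  qed
  have 4: "\<forall>V W U. simV S V W \<longrightarrow> cval S U \<longrightarrow> simT S (App V U) (App W U)"
    unfolding simV_def simT_def app_sim_def by blast
  show ?thesis unfolding app_sim_def using 1 2 3 4 by blast
qed

lemma simT_closed: "simT S M N \<Longrightarrow> ctrm S M \<and> ctrm S N"
  using sim_app_sim unfolding app_sim_def by blast
lemma simV_closed: "simV S V W \<Longrightarrow> cval S V \<and> cval S W"
  using sim_app_sim unfolding app_sim_def by blast
lemma simT_sem: "simT S M N \<Longrightarrow> rlt S (simV S) (sem S M) (sem S N)"
  using sim_app_sim unfolding app_sim_def by blast
lemma simV_app: "simV S V W \<Longrightarrow> cval S U \<Longrightarrow> simT S (App V U) (App W U)"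
  using sim_app_sim unfolding app_sim_def by blast

lemma refl_app_sim: "app_sim S (\<lambda>M N. ctrm S M \<and> M = N) (\<lambda>V W. cval S V \<and> V = W)"
  unfolding app_sim_def using r_id by (auto simp: ctrm_def cval_def)

lemma simT_refl: "ctrm S M \<Longrightarrow> simT S M M"
  unfolding simT_def using refl_app_sim by blast
lemma simV_refl: "cval S V \<Longrightarrow> simV S V V"
  unfolding simV_def using refl_app_sim by blast

lemma trans_app_sim: "app_sim S (simT S OO simT S) (simV S OO simV S)"
proof -
  have 1: "\<forall>M N. (simT S OO simT S) M N \<longrightarrow> ctrm S M \<and> ctrm S N"
    using simT_closed by blast
  have 2: "\<forall>V W. (simV S OO simV S) V W \<longrightarrow> cval S V \<and> cval S W"
    using simV_closed by blast
  have 3: "\<forall>M N. (simT S OO simT S) M N \<longrightarrow> rlt S (simV S OO simV S) (sem S M) (sem S N)"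
    using simT_sem r_comp by blast
  have 4: "\<forall>V W U. (simV S OO simV S) V W \<longrightarrow> cval S U \<longrightarrow> (simT S OO simT S) (App V U) (App W U)"
    using simV_app by blast
  show ?thesis unfolding app_sim_def using 1 2 3 4 by blast
qed

lemma simT_trans: "simT S M N \<Longrightarrow> simT S N P \<Longrightarrow> simT S M P"
  unfolding simT_def[of S M P] using trans_app_sim by blast
lemma simV_trans: "simV S M N \<Longrightarrow> simV S N P \<Longrightarrow> simV S M P"
  unfolding simV_def[of S M P] using trans_app_sim by blast

section \<open>Open extension\<close>

abbreviation "ar \<equiv> sig_ar S"

lemma openT0: "openT S 0 M N = (ctrm S M \<and> ctrm S N \<and> simT S M N)"
  unfolding openT_def ctrm_def by (auto simp: closed_trm)
lemma openV0: "openV S 0 V W = (cval S V \<and> cval S W \<and> simV S V W)"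
  unfolding openV_def cval_def by (auto simp: closed_val)

lemma closing: "\<forall>i<n. cval S (vs i) \<Longrightarrow> \<forall>i<n. wf_val ar 0 (vs i)"
  by (simp add: cval_def)

lemma openT_refl: "wf_trm ar m M \<Longrightarrow> openT S m M M"
  unfolding openT_def using wf_psubst(1) simT_refl closing by (metis ctrm_def)
lemma openV_refl: "wf_val ar m V \<Longrightarrow> openV S m V V"
  unfolding openV_def using wf_psubst(2) simV_refl closing by (metis cval_def)

lemma openT_trans: "openT S m M N \<Longrightarrow> openT S m N P \<Longrightarrow> openT S m M P"
  unfolding openT_def using simT_trans by blast
lemma openV_trans: "openV S m M N \<Longrightarrow> openV S m N P \<Longrightarrow> openV S m M P"
  unfolding openV_def using simV_trans by blast

lemma close_comp: "\<forall>i<m. wf_val ar k (\<sigma> i) \<Longrightarrow> \<forall>i<k. cval S (vs i) \<Longrightarrow> \<forall>i<m. cval S (psubst_val vs (\<sigma> i))"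
  unfolding cval_def using wf_psubst(2) by blast

lemma openT_subst: "openT S m M N \<Longrightarrow> \<forall>i<m. wf_val ar k (\<sigma> i) \<Longrightarrow> openT S k (psubst_trm \<sigma> M) (psubst_trm \<sigma> N)"
  unfolding openT_def
proof (elim conjE, intro conjI allI impI)
  assume w: "wf_trm ar m M" "wf_trm ar m N" "\<forall>i<m. wf_val ar k (\<sigma> i)"
    and h: "\<forall>vs. (\<forall>i<m. cval S (vs i)) \<longrightarrow> simT S (psubst_trm vs M) (psubst_trm vs N)"
  show "wf_trm ar k (psubst_trm \<sigma> M)" "wf_trm ar k (psubst_trm \<sigma> N)" using w wf_psubst(1) by blast+
  fix vs assume "\<forall>i<k. cval S (vs i)"
  hence "\<forall>i<m. cval S (psubst_val vs (\<sigma> i))" using close_comp w(3) by blast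
  thus "simT S (psubst_trm vs (psubst_trm \<sigma> M)) (psubst_trm vs (psubst_trm \<sigma> N))"
    using h by (simp add: comp_subst)
qed

lemma openV_subst: "openV S m M N \<Longrightarrow> \<forall>i<m. wf_val ar k (\<sigma> i) \<Longrightarrow> openV S k (psubst_val \<sigma> M) (psubst_val \<sigma> N)"
  unfolding openV_def
proof (elim conjE, intro conjI allI impI)
  assume w: "wf_val ar m M" "wf_val ar m N" "\<forall>i<m. wf_val ar k (\<sigma> i)"
    and h: "\<forall>vs. (\<forall>i<m. cval S (vs i)) \<longrightarrow> simV S (psubst_val vs M) (psubst_val vs N)"
  show "wf_val ar k (psubst_val \<sigma> M)" "wf_val ar k (psubst_val \<sigma> N)" using w wf_psubst(2) by blast+
  fix vs assume "\<forall>i<k. cval S (vs i)"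
  hence "\<forall>i<m. cval S (psubst_val vs (\<sigma> i))" using close_comp w(3) by blast
  thus "simV S (psubst_val vs (psubst_val \<sigma> M)) (psubst_val vs (psubst_val \<sigma> N))"
    using h by (simp add: comp_subst)
qed

end



context hs begin

lemma howe_wf:
  "howeT S m M N \<Longrightarrow> wf_trm ar m M \<and> wf_trm ar m N"
  "howeV S m V W \<Longrightarrow> wf_val ar m V \<and> wf_val ar m W"
proof (induction rule: howeT_howeV.inducts)
  case (H6 Ms Ns n s N)
  thus ?case unfolding openT_def by (auto simp: in_set_conv_nth)
qed (auto simp: openT_def openV_def)

lemma howe_ptrans:
  "howeT S m M N \<Longrightarrow> openT S m N P \<Longrightarrow> howeT S m M P"
  "howeV S m V W \<Longrightarrow> openV S m W X \<Longrightarrow> howeV S m V X"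
proof -
  show "howeT S m M N \<Longrightarrow> openT S m N P \<Longrightarrow> howeT S m M P"
    by (erule howeT.cases) (auto intro: howeT_howeV.intros openT_trans)
  show "howeV S m V W \<Longrightarrow> openV S m W X \<Longrightarrow> howeV S m V X"
    by (erule howeV.cases) (auto intro: howeT_howeV.intros openV_trans)
qed

lemma howe_refl:
  fixes M :: "'op trm" and V :: "'op val"
  shows "wf_trm ar m M \<Longrightarrow> howeT S m M M" and "wf_val ar m V \<Longrightarrow> howeV S m V V"
proof (induction M and V arbitrary: m and m)
  case (Var i) thus ?case by (auto intro!: H1 openV_refl)
next
  case (Lam M) thus ?case by (auto intro!: H2 openV_refl)
next
  case (Ret V) thus ?case by (auto intro!: H3 openT_refl)
next
  case (App V W) thus ?case by (auto intro!: H4 openT_refl)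
next
  case (To M N) thus ?case by (auto intro!: H5 openT_refl)
next
  case (Op s Ms)
  show ?case
  proof (rule H6[of Ms Ms])
    show "\<forall>k<length Ms. howeT S m (Ms ! k) (Ms ! k)" using Op by auto
    show "openT S m (Op s Ms) (Op s Ms)" using Op.prems by (rule openT_refl)
  qed simp
qed

lemma upren_lt: "\<forall>i<m. r i < k \<Longrightarrow> \<forall>i<Suc m. upren r i < Suc k"
  by (auto simp: upren_def split: nat.split)

lemma howe_ren:
  "howeT S m M N \<Longrightarrow> \<forall>(k::nat) (r::nat\<Rightarrow>nat). (\<forall>i<m. r i < k) \<longrightarrow> howeT S k (psubst_trm (\<lambda>i. Var (r i)) M) (psubst_trm (\<lambda>i. Var (r i)) N)"
  "howeV S m V W \<Longrightarrow> \<forall>(k::nat) (r::nat\<Rightarrow>nat). (\<forall>i<m. r i < k) \<longrightarrow> howeV S k (psubst_val (\<lambda>i. Var (r i)) V) (psubst_val (\<lambda>i. Var (r i)) W)"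
proof (induction rule: howeT_howeV.inducts)
  case (H1 i n V)
  show ?case
  proof (intro allI impI)
    fix k :: nat and r :: "nat \<Rightarrow> nat" assume r: "\<forall>i<n. r i < k"
    have "openV S k (psubst_val (\<lambda>i. Var (r i)) (Var i)) (psubst_val (\<lambda>i. Var (r i)) V)"
      using H1 r by (intro openV_subst) auto
    thus "howeV S k (psubst_val (\<lambda>i. Var (r i)) (Var i)) (psubst_val (\<lambda>i. Var (r i)) V)"
      using H1 r by (auto intro: howeT_howeV.H1)
  qed
next
  case (H2 n M L V)
  show ?case
  proof (intro allI impI)
    fix k :: nat and r :: "nat \<Rightarrow> nat" assume r: "\<forall>i<n. r i < k"
    have "howeT S (Suc k) (psubst_trm (\<lambda>i. Var (upren r i)) M) (psubst_trm (\<lambda>i. Var (upren r i)) L)"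
      using H2.IH upren_lt[OF r] by blast
    moreover have "openV S k (psubst_val (\<lambda>i. Var (r i)) (Lam L)) (psubst_val (\<lambda>i. Var (r i)) V)"
      using H2 r by (intro openV_subst) auto
    ultimately show "howeV S k (psubst_val (\<lambda>i. Var (r i)) (Lam M)) (psubst_val (\<lambda>i. Var (r i)) V)"
      by (auto simp: ext_ren' intro: howeT_howeV.H2)
  qed
next
  case (H3 n V W N)
  show ?case
  proof (intro allI impI)
    fix k :: nat and r :: "nat \<Rightarrow> nat" assume r: "\<forall>i<n. r i < k"
    have "openT S k (psubst_trm (\<lambda>i. Var (r i)) (Ret W)) (psubst_trm (\<lambda>i. Var (r i)) N)"
      using H3 r by (intro openT_subst) auto
    moreover have "howeV S k (psubst_val (\<lambda>i. Var (r i)) V) (psubst_val (\<lambda>i. Var (r i)) W)" using H3.IH r by blast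
    ultimately show "howeT S k (psubst_trm (\<lambda>i. Var (r i)) (Ret V)) (psubst_trm (\<lambda>i. Var (r i)) N)"
      by (auto intro: howeT_howeV.H3)
  qed
next
  case (H4 n V V' W W' N)
  show ?case
  proof (intro allI impI)
    fix k :: nat and r :: "nat \<Rightarrow> nat" assume r: "\<forall>i<n. r i < k"
    have "openT S k (psubst_trm (\<lambda>i. Var (r i)) (App V' W')) (psubst_trm (\<lambda>i. Var (r i)) N)"
      using H4 r by (intro openT_subst) auto
    moreover have "howeV S k (psubst_val (\<lambda>i. Var (r i)) V) (psubst_val (\<lambda>i. Var (r i)) V')" using H4.IH r by blast
    moreover have "howeV S k (psubst_val (\<lambda>i. Var (r i)) W) (psubst_val (\<lambda>i. Var (r i)) W')" using H4.IH r by blast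
    ultimately show "howeT S k (psubst_trm (\<lambda>i. Var (r i)) (App V W)) (psubst_trm (\<lambda>i. Var (r i)) N)"
      by (auto intro: howeT_howeV.H4)
  qed
next
  case (H5 n M L M' L' N)
  show ?case
  proof (intro allI impI)
    fix k :: nat and r :: "nat \<Rightarrow> nat" assume r: "\<forall>i<n. r i < k"
    have "howeT S (Suc k) (psubst_trm (\<lambda>i. Var (upren r i)) M') (psubst_trm (\<lambda>i. Var (upren r i)) L')"
      using H5.IH upren_lt[OF r] by blast
    moreover have "howeT S k (psubst_trm (\<lambda>i. Var (r i)) M) (psubst_trm (\<lambda>i. Var (r i)) L)"
      using H5.IH r by blast
    moreover have "openT S k (psubst_trm (\<lambda>i. Var (r i)) (To L L')) (psubst_trm (\<lambda>i. Var (r i)) N)"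
      using H5 r by (intro openT_subst) auto
    ultimately show "howeT S k (psubst_trm (\<lambda>i. Var (r i)) (To M M')) (psubst_trm (\<lambda>i. Var (r i)) N)"
      by (auto simp: ext_ren' intro: howeT_howeV.H5)
  qed
next
  case (H6 Ms Ns n s N)
  show ?case
  proof (intro allI impI)
    fix k :: nat and r :: "nat \<Rightarrow> nat" assume r: "\<forall>i<n. r i < k"
    have "openT S k (psubst_trm (\<lambda>i. Var (r i)) (Op s Ns)) (psubst_trm (\<lambda>i. Var (r i)) N)"
      using H6 r by (intro openT_subst) auto
    hence o: "openT S k (Op s (map (psubst_trm (\<lambda>i. Var (r i))) Ns)) (psubst_trm (\<lambda>i. Var (r i)) N)" by simp
    show "howeT S k (psubst_trm (\<lambda>i. Var (r i)) (Op s Ms)) (psubst_trm (\<lambda>i. Var (r i)) N)"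
      unfolding psubst_trm.simps
      by (rule howeT_howeV.H6[OF _ _ o]) (use H6 r in auto)
  qed
qed

lemma howe_lift: "howeV S k V W \<Longrightarrow> howeV S (Suc k) (lift_val 0 V) (lift_val 0 W)"
  unfolding lift0 using howe_ren(2) by blast

lemma ext_howe: "\<forall>i<m. howeV S k (\<sigma> i) (\<tau> i) \<Longrightarrow> \<forall>i<Suc m. howeV S (Suc k) (ext_subst \<sigma> i) (ext_subst \<tau> i)"
proof (intro allI impI)
  fix i assume a: "\<forall>i<m. howeV S k (\<sigma> i) (\<tau> i)" and i: "i < Suc m"
  show "howeV S (Suc k) (ext_subst \<sigma> i) (ext_subst \<tau> i)"
  proof (cases i)
    case 0 thus ?thesis by (simp add: ext_subst_def howe_refl(2))
  next
    case (Suc j) thus ?thesis using a i by (simp add: ext_subst_def howe_lift)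
  qed
qed

lemma howe_wfs: "\<forall>i<m. howeV S k (\<sigma> i) (\<tau> i) \<Longrightarrow> \<forall>i<m. wf_val ar k (\<tau> i)"
  using howe_wf(2) by blast

lemma howe_subst:
  "howeT S m M N \<Longrightarrow> \<forall>k \<sigma> \<tau>. (\<forall>i<m. howeV S k (\<sigma> i) (\<tau> i)) \<longrightarrow> howeT S k (psubst_trm \<sigma> M) (psubst_trm \<tau> N)"
  "howeV S m V W \<Longrightarrow> \<forall>k \<sigma> \<tau>. (\<forall>i<m. howeV S k (\<sigma> i) (\<tau> i)) \<longrightarrow> howeV S k (psubst_val \<sigma> V) (psubst_val \<tau> W)"
proof (induction rule: howeT_howeV.inducts)
  case (H1 i n V)
  show ?case
  proof (intro allI impI)
    fix k \<sigma> \<tau> assume r: "\<forall>i<n. howeV S k (\<sigma> i) (\<tau> i)"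
    have "openV S k (psubst_val \<tau> (Var i)) (psubst_val \<tau> V)"
      using H1 howe_wfs[OF r] by (intro openV_subst) auto
    thus "howeV S k (psubst_val \<sigma> (Var i)) (psubst_val \<tau> V)"
      using H1 r howe_ptrans(2) by auto
  qed
next
  case (H2 n M L V)
  show ?case
  proof (intro allI impI)
    fix k \<sigma> \<tau> assume r: "\<forall>i<n. howeV S k (\<sigma> i) (\<tau> i)"
    have "howeT S (Suc k) (psubst_trm (ext_subst \<sigma>) M) (psubst_trm (ext_subst \<tau>) L)"
      using H2.IH ext_howe[OF r] by blast
    moreover have "openV S k (psubst_val \<tau> (Lam L)) (psubst_val \<tau> V)"
      using H2 howe_wfs[OF r] by (intro openV_subst) auto
    ultimately show "howeV S k (psubst_val \<sigma> (Lam M)) (psubst_val \<tau> V)"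
      by (auto intro: howeT_howeV.H2)
  qed
next
  case (H3 n V W N)
  show ?case
  proof (intro allI impI)
    fix k \<sigma> \<tau> assume r: "\<forall>i<n. howeV S k (\<sigma> i) (\<tau> i)"
    have "openT S k (psubst_trm \<tau> (Ret W)) (psubst_trm \<tau> N)"
      using H3 howe_wfs[OF r] by (intro openT_subst) auto
    moreover have "howeV S k (psubst_val \<sigma> V) (psubst_val \<tau> W)" using H3.IH r by blast
    ultimately show "howeT S k (psubst_trm \<sigma> (Ret V)) (psubst_trm \<tau> N)"
      by (auto intro: howeT_howeV.H3)
  qed
next
  case (H4 n V V' W W' N)
  show ?case
  proof (intro allI impI)
    fix k \<sigma> \<tau> assume r: "\<forall>i<n. howeV S k (\<sigma> i) (\<tau> i)"
    have "openT S k (psubst_trm \<tau> (App V' W')) (psubst_trm \<tau> N)"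
      using H4 howe_wfs[OF r] by (intro openT_subst) auto
    moreover have "howeV S k (psubst_val \<sigma> V) (psubst_val \<tau> V')" using H4.IH r by blast
    moreover have "howeV S k (psubst_val \<sigma> W) (psubst_val \<tau> W')" using H4.IH r by blast
    ultimately show "howeT S k (psubst_trm \<sigma> (App V W)) (psubst_trm \<tau> N)"
      by (auto intro: howeT_howeV.H4)
  qed
next
  case (H5 n M L M' L' N)
  show ?case
  proof (intro allI impI)
    fix k \<sigma> \<tau> assume r: "\<forall>i<n. howeV S k (\<sigma> i) (\<tau> i)"
    have "howeT S (Suc k) (psubst_trm (ext_subst \<sigma>) M') (psubst_trm (ext_subst \<tau>) L')"
      using H5.IH ext_howe[OF r] by blast
    moreover have "howeT S k (psubst_trm \<sigma> M) (psubst_trm \<tau> L)"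
      using H5.IH r by blast
    moreover have "openT S k (psubst_trm \<tau> (To L L')) (psubst_trm \<tau> N)"
      using H5 howe_wfs[OF r] by (intro openT_subst) auto
    ultimately show "howeT S k (psubst_trm \<sigma> (To M M')) (psubst_trm \<tau> N)"
      by (auto intro: howeT_howeV.H5)
  qed
next
  case (H6 Ms Ns n s N)
  show ?case
  proof (intro allI impI)
    fix k \<sigma> \<tau> assume r: "\<forall>i<n. howeV S k (\<sigma> i) (\<tau> i)"
    have "openT S k (psubst_trm \<tau> (Op s Ns)) (psubst_trm \<tau> N)"
      using H6 howe_wfs[OF r] by (intro openT_subst) auto
    hence o: "openT S k (Op s (map (psubst_trm \<tau>) Ns)) (psubst_trm \<tau> N)" by simp
    show "howeT S k (psubst_trm \<sigma> (Op s Ms)) (psubst_trm \<tau> N)"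
      unfolding psubst_trm.simps
      by (rule howeT_howeV.H6[OF _ _ o]) (use H6 r in auto)
  qed
qed

end



context hs begin

lemma compose: "rlt S (howeV S 0) u v \<Longrightarrow> rlt S (simV S) v w \<Longrightarrow> rlt S (howeV S 0) u w"
proof -
  assume a: "rlt S (howeV S 0) u v" "rlt S (simV S) v w"
  have "rlt S (howeV S 0 OO simV S) u w" using r_comp[OF a] .
  thus ?thesis
  proof (rule r_mono[rotated])
    fix x z assume "(howeV S 0 OO simV S) x z"
    then obtain y where h: "howeV S 0 x y" "simV S y z" by blast
    have "openV S 0 y z" using h(2) simV_closed openV0 by blast
    thus "howeV S 0 x z" using howe_ptrans(2)[OF h(1)] by blast
  qed
qed

lemma subst1_howe: "howeT S (Suc 0) M L \<Longrightarrow> howeV S 0 V W \<Longrightarrow> howeT S 0 (subst1 V M) (subst1 W L)"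
  unfolding subst1_def using howe_subst(1) by (auto split: nat.split)

lemma howeV0_cval: "howeV S 0 V W \<Longrightarrow> cval S V \<and> cval S W"
  using howe_wf(2) cval_def by blast
lemma howeT0_ctrm: "howeT S 0 M N \<Longrightarrow> ctrm S M \<and> ctrm S N"
  using howe_wf(1) ctrm_def by blast

lemma key: "howeT S 0 M N \<Longrightarrow> rlt S (howeV S 0) (approx S n M) (sem S N)"
proof (induction n arbitrary: M N)
  case 0 thus ?case by (simp add: r_bot)
next
  case (Suc n)
  from Suc.prems show ?case
  proof (cases rule: howeT.cases)
    case (H3 V W)
    have c: "cval S V" "cval S W" using howeV0_cval[OF H3(2)] by auto
    have "rlt S (howeV S 0) (m_unit S V) (m_unit S W)" using c by (rule r_unit[where R="howeV S 0"]) (rule H3(2))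
    moreover have "rlt S (simV S) (sem S (Ret W)) (sem S N)"
      using H3(3) openT0 simT_sem by blast
    ultimately show ?thesis using H3(1) c(2) by (simp add: sem_Ret compose)
  next
    case (H4 V V' U U')
    obtain M' where V: "V = Lam M'"
      using howe_wf(2)[OF H4(2)] by (cases V) auto
    from H4(2)[unfolded V] obtain L where L: "howeT S (Suc 0) M' L" "openV S 0 (Lam L) V'"
      by (cases rule: howeV.cases) auto
    have cU': "cval S U'" using howeV0_cval[OF H4(3)] by auto
    have "rlt S (howeV S 0) (approx S n (subst1 U M')) (sem S (subst1 U' L))"
      using Suc.IH subst1_howe[OF L(1) H4(3)] by blast
    moreover have "sem S (subst1 U' L) = sem S (App (Lam L) U')"
      using sem_App[OF cU'] howe_wf(1)[OF L(1)] by simp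
    moreover have "simT S (App (Lam L) U') N"
    proof -
      have "simV S (Lam L) V'" using L(2) openV0 by blast
      hence "simT S (App (Lam L) U') (App V' U')" using simV_app cU' by blast
      moreover have "simT S (App V' U') N" using H4(4) openT0 by blast
      ultimately show ?thesis by (rule simT_trans)
    qed
    ultimately show ?thesis using H4(1) V by (simp add: compose simT_sem)
  next
    case (H5 M1 L M' L')
    have cT: "ctrm S (To L L')" using H5(4) openT0 by blast
    have "rlt S (howeV S 0) (m_bind S (approx S n M1) (\<lambda>V. approx S n (subst1 V M')))
                               (m_bind S (sem S L) (\<lambda>W. sem S (subst1 W L')))"
    proof (rule r_bind)
      fix x y assume "cval S x" "cval S y" "howeV S 0 x y"
      thus "rlt S (howeV S 0) (approx S n (subst1 x M')) (sem S (subst1 y L'))"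
        using Suc.IH subst1_howe[OF H5(3)] by blast
    next
      show "rlt S (howeV S 0) (approx S n M1) (sem S L)" using Suc.IH H5(2) by blast
    qed
    moreover have "rlt S (simV S) (sem S (To L L')) (sem S N)"
      using H5(4) openT0 simT_sem by blast
    ultimately show ?thesis using H5(1) sem_To[OF cT] by (simp add: compose)
  next
    case (H6 Ms Ns s)
    have cM: "ctrm S M" using howeT0_ctrm[OF Suc.prems] by blast
    have cN: "ctrm S (Op s Ns)" using H6(4) openT0 by blast
    have "rlt S (howeV S 0) (op_int S s (map (approx S n) Ms)) (op_int S s (map (sem S) Ns))"
    proof (rule r_op)
      show "length (map (approx S n) Ms) = sig_ar S s" using cM H6(1) by (simp add: ctrm_def)
      show "list_all2 (rlt S (howeV S 0)) (map (approx S n) Ms) (map (sem S) Ns)"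
        unfolding list_all2_conv_all_nth using H6(2,3) Suc.IH by auto
    qed
    moreover have "rlt S (simV S) (sem S (Op s Ns)) (sem S N)"
      using H6(4) openT0 simT_sem by blast
    ultimately show ?thesis using H6(1) sem_Op[OF cN] by (simp add: compose)
  qed
qed

lemma howe_sem: "howeT S 0 M N \<Longrightarrow> rlt S (howeV S 0) (sem S M) (sem S N)"
  unfolding sem_def[of S M]
  by (rule r_lub[OF approx_ochain]) (use howeT0_ctrm key in auto)

lemma howe_app_sim: "app_sim S (howeT S 0) (howeV S 0)"
proof -
  have 4: "howeT S 0 (App V U) (App W U)" if h: "howeV S 0 V W" "cval S U" for V W U
  proof (rule H4)
    show "howeV S 0 V W" by (rule h(1))
    show "howeV S 0 U U" using h(2) howe_refl(2) cval_def by blast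
    show "openT S 0 (App W U) (App W U)"
      using howeV0_cval[OF h(1)] h(2) by (intro openT_refl) (simp add: cval_def)
  qed
  show ?thesis unfolding app_sim_def using howeT0_ctrm howeV0_cval howe_sem 4 by blast
qed

end

theorem mainTheorem9:
  fixes S :: "('op, 't) effsem"
  assumes "cont_sigma_monad S"
    and "is_relator S"
    and "inductive_relator S"
    and "respects_sigma S"
  shows "app_sim S (howeT S 0) (howeV S 0)"
proof -
  interpret hs S using assms by unfold_locales
  show ?thesis by (rule howe_app_sim)
qed


end
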